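(* Let $D>0$, $\Delta=2\sqrt{3D}$, and $\mathcal Q$ map a real number to the nearest point of $\Delta\mathbb Z$. Let $\mathbf X=(X_1,\dots,X_n)$ be a random vector of real random variables each having a density, let $\hat{\mathbf X}=(\hat X_1,\dots,\hat X_n)$ be a random vector taking finitely many values with $\frac1n\mathbb E\|\mathbf X-\hat{\mathbf X}\|^2\le D'$, and let $Z$ be uniform on $[-\Delta/2,\Delta/2]$, independent of $(\mathbf X,\hat{\mathbf X})$. Let $\mathbf Y=(\mathcal Q(X_1+Z),\dots,\mathcal Q(X_n+Z))$ (the same dither realization in every coordinate). Then $$H(\mathbf Y\mid\hat{\mathbf X},Z)\le\frac n2\log_2\!\Big[\frac{\pi e}{6}\Big(\frac{D'}{D}+1\Big)\Big].$$ In particular, if $D'=D$, then $H(\mathbf Y\mid\hat{\mathbf X},Z)\le\frac n2\log_2\frac{\pi e}{3}\approx 0.754\,n$.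
   Context: Logarithms are base 2; $H(\cdot\mid\cdot,Z)$ denotes conditional discrete entropy averaged over the continuous dither $Z$. *)

theory Defs
  imports "HOL-Probability.Probability"
begin

text \<open>Uniform scalar quantizer: maps x to a nearest point of the lattice Delta*Z
  (ties, a null set here, are broken upward by round).\<close>
definition quant :: "real \<Rightarrow> real \<Rightarrow> real" where
  "quant Delta x = Delta * of_int (round (x / Delta))"

definition lattice_vecs :: "real \<Rightarrow> nat \<Rightarrow> real list set" where
  "lattice_vecs Delta n = {ys. length ys = n \<and> set ys \<subseteq> range (\<lambda>k::int. Delta * of_int k)}"

end

theory Submission
  imports Defs "HOL-Probability.Probability"
begin

lemma borel_measurable_round[measurable]: "(round :: real \<Rightarrow> int) \<in> borel \<rightarrow>\<^sub>M count_space UNIV"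
proof -
  have e: "round = (\<lambda>x::real. floor (x + 1/2))" by (rule ext) (simp add: round_def)
  have "(\<lambda>x::real. floor (x + 1/2)) \<in> borel \<rightarrow>\<^sub>M count_space UNIV"
    by (rule measurable_compose[OF _ measurable_real_floor]) measurable
  then show ?thesis by (simp add: e)
qed

lemma quant_measurable[measurable]: "quant d \<in> borel_measurable borel"
  unfolding quant_def by measurable

lemma periodize:
  fixes h :: "real \<Rightarrow> ennreal" and d a :: real
  assumes hm[measurable]: "h \<in> borel_measurable borel" and d: "d > 0"
  shows "(\<integral>\<^sup>+z. (\<integral>\<^sup>+k. h (d * of_int k - z - a) \<partial>count_space UNIV) * indicator {-d/2..d/2} z \<partial>lborel)
         \<le> (\<integral>\<^sup>+s. h s \<partial>lborel)"
proof -
  interpret pf: pair_sigma_finite lborel "count_space (UNIV::int set)"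
    by (intro pair_sigma_finite.intro lborel.sigma_finite_measure_axioms sigma_finite_measure_count_space)
  have m1: "(\<lambda>(z, k::int). h (d * of_int k - z - a) * indicator {-d/2..d/2} z) \<in> borel_measurable (lborel \<Otimes>\<^sub>M count_space UNIV)"
  proof -
    have "(\<lambda>x. (\<lambda>k::int. \<lambda>x. h (d * of_int k - fst x - a) * indicator {-d/2..d/2} (fst x)) (snd x) x)
       \<in> borel_measurable (lborel \<Otimes>\<^sub>M count_space UNIV)"
      by (rule measurable_compose_countable) measurable
    then show ?thesis by (simp add: case_prod_beta')
  qed
  have m2: "(\<lambda>(s, k::int). h s * indicator {-d/2..d/2} (d * of_int k - a - s)) \<in> borel_measurable (lborel \<Otimes>\<^sub>M count_space UNIV)"
  proof -
    have "(\<lambda>x. (\<lambda>k::int. \<lambda>x. h (fst x) * indicator {-d/2..d/2} (d * of_int k - a - fst x)) (snd x) x)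
       \<in> borel_measurable (lborel \<Otimes>\<^sub>M count_space UNIV)"
      by (rule measurable_compose_countable) measurable
    then show ?thesis by (simp add: case_prod_beta')
  qed
  have "(\<integral>\<^sup>+z. (\<integral>\<^sup>+k. h (d * of_int k - z - a) \<partial>count_space UNIV) * indicator {-d/2..d/2} z \<partial>lborel)
      = (\<integral>\<^sup>+z. (\<integral>\<^sup>+k. h (d * of_int k - z - a) * indicator {-d/2..d/2} z \<partial>count_space UNIV) \<partial>lborel)"
    by (simp add: nn_integral_multc)
  also have "\<dots> = (\<integral>\<^sup>+k. (\<integral>\<^sup>+z. h (d * of_int k - z - a) * indicator {-d/2..d/2} z \<partial>lborel) \<partial>count_space UNIV)"
    using pf.Fubini'[OF m1] by simp
  also have "\<dots> = (\<integral>\<^sup>+k. (\<integral>\<^sup>+s. h s * indicator {-d/2..d/2} (d * of_int k - a - s) \<partial>lborel) \<partial>count_space UNIV)"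
  proof (rule nn_integral_cong)
    fix k :: int
    have "(\<integral>\<^sup>+s. h s * indicator {-d/2..d/2} (d * of_int k - a - s) \<partial>lborel)
        = ennreal \<bar>-1\<bar> * (\<integral>\<^sup>+x. h ((d * of_int k - a) + (-1) * x) * indicator {-d/2..d/2} (d * of_int k - a - ((d * of_int k - a) + (-1) * x)) \<partial>lborel)"
      by (rule nn_integral_real_affine) auto
    also have "\<dots> = (\<integral>\<^sup>+z. h (d * of_int k - z - a) * indicator {-d/2..d/2} z \<partial>lborel)"
      by (simp add: algebra_simps)
    finally show "(\<integral>\<^sup>+z. h (d * of_int k - z - a) * indicator {-d/2..d/2} z \<partial>lborel)
        = (\<integral>\<^sup>+s. h s * indicator {-d/2..d/2} (d * of_int k - a - s) \<partial>lborel)" by simp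
  qed
  also have "\<dots> = (\<integral>\<^sup>+s. (\<integral>\<^sup>+k. h s * indicator {-d/2..d/2} (d * of_int k - a - s) \<partial>count_space UNIV) \<partial>lborel)"
    using pf.Fubini'[OF m2] by simp
  also have "\<dots> = (\<integral>\<^sup>+s. h s * (\<integral>\<^sup>+k. indicator {-d/2..d/2} (d * of_int k - a - s) \<partial>count_space UNIV) \<partial>lborel)"
    by (simp add: nn_integral_cmult)
  also have "\<dots> \<le> (\<integral>\<^sup>+s. h s * 1 \<partial>lborel)"
  proof (rule nn_integral_mono_AE)
    let ?B = "range (\<lambda>j::int. d * of_int j + d/2 - a)"
    have "?B \<in> null_sets lborel" by (intro countable_imp_null_set_lborel) auto
    then have "AE s in lborel. s \<notin> ?B" by (rule AE_not_in)
    then show "AE s in lborel. h s * (\<integral>\<^sup>+k. indicator {-d/2..d/2} (d * of_int k - a - s) \<partial>count_space UNIV) \<le> h s * 1"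
    proof eventually_elim
      case (elim s)
      define K where "K = {k::int. d * of_int k - a - s \<in> {-d/2..d/2}}"
      have uniq: "k = k'" if "k \<in> K" "k' \<in> K" for k k'
      proof (rule ccontr)
        assume ne: "k \<noteq> k'"
        have b1: "-(d/2) \<le> d * of_int k - a - s \<and> d * of_int k - a - s \<le> d/2"
           "-(d/2) \<le> d * of_int k' - a - s \<and> d * of_int k' - a - s \<le> d/2"
          using that by (auto simp: K_def)
        then have a1: "\<bar>d * of_int k - a - s\<bar> \<le> d/2" "\<bar>d * of_int k' - a - s\<bar> \<le> d/2"
          by linarith+
        have "\<bar>d * (of_int k - of_int k')\<bar> \<le> d" unfolding right_diff_distrib using b1 by linarith
        then have "\<bar>of_int k - of_int k'\<bar> \<le> (1::real)" using d by (simp add: abs_mult)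
        then have "\<bar>k - k'\<bar> \<le> 1" by linarith
        with ne have "k' = k + 1 \<or> k = k' + 1" by linarith
        then show False
        proof
          assume "k' = k + 1"
          then have "d * of_int k' = d * of_int k + d" by (simp add: algebra_simps)
          then have "s = d * of_int k + d/2 - a" using b1 by linarith
          then show False using elim by auto
        next
          assume "k = k' + 1"
          then have "d * of_int k = d * of_int k' + d" by (simp add: algebra_simps)
          then have "s = d * of_int k' + d/2 - a" using b1 by linarith
          then show False using elim by auto
        qed
      qed
      have "(\<integral>\<^sup>+k. indicator {-d/2..d/2} (d * of_int k - a - s) \<partial>count_space UNIV) = (\<integral>\<^sup>+k. indicator K k \<partial>count_space UNIV)"
        by (simp add: K_def indicator_def)
      also have "\<dots> = emeasure (count_space UNIV) K" by simp
      also have "\<dots> \<le> 1"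
      proof (cases "K = {}")
        case True then show ?thesis by simp
      next
        case False
        then obtain k0 where "k0 \<in> K" by auto
        then have "K = {k0}" using uniq by auto
        then show ?thesis by simp
      qed
      finally show ?case by (intro mult_left_mono) auto
    qed
  qed
  finally show ?thesis by simp
qed

definition Sg :: "real \<Rightarrow> real \<Rightarrow> real \<Rightarrow> ennreal" where
  "Sg d \<sigma> t = (\<integral>\<^sup>+k. ennreal (normal_density 0 \<sigma> (d * of_int k - t)) \<partial>count_space (UNIV::int set))"

lemma Sg_measurable[measurable]: "Sg d \<sigma> \<in> borel_measurable borel"
proof -
  interpret sf: sigma_finite_measure "count_space (UNIV::int set)"
    by (rule sigma_finite_measure_count_space)
  have "(\<lambda>x. (\<lambda>k::int. \<lambda>x. ennreal (normal_density 0 \<sigma> (d * of_int k - fst x))) (snd x) x)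
       \<in> borel_measurable (borel \<Otimes>\<^sub>M count_space UNIV)"
    by (rule measurable_compose_countable) measurable
  then have "(\<lambda>x. ennreal (normal_density 0 \<sigma> (d * of_int (snd x) - fst x))) \<in> borel_measurable (borel \<Otimes>\<^sub>M count_space UNIV)"
    by simp
  from sf.borel_measurable_nn_integral_fst[OF this] show ?thesis
    unfolding Sg_def[abs_def] by simp
qed

lemma ge_single_term:
  fixes f :: "'b \<Rightarrow> ennreal"
  shows "f k0 \<le> (\<integral>\<^sup>+k. f k \<partial>count_space UNIV)"
proof -
  have "f k0 = (\<integral>\<^sup>+k. f k * indicator {k0} k \<partial>count_space UNIV)" by simp
  also have "\<dots> \<le> (\<integral>\<^sup>+k. f k \<partial>count_space UNIV)"
    by (intro nn_integral_mono) (simp split: split_indicator)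
  finally show ?thesis .
qed

lemma Sg_pos: assumes "\<sigma> > 0" shows "0 < Sg d \<sigma> t"
proof -
  have "0 < normal_density 0 \<sigma> (d * of_int 0 - t)" by (rule normal_density_pos[OF assms])
  then have "0 < ennreal (normal_density 0 \<sigma> (d * of_int 0 - t))" by (simp only: ennreal_less_zero_iff)
  also have "\<dots> \<le> Sg d \<sigma> t" unfolding Sg_def by (rule ge_single_term)
  finally show ?thesis .
qed

lemma nn_integral_normal: assumes "\<sigma> > 0" shows "(\<integral>\<^sup>+x. ennreal (normal_density \<mu> \<sigma> x) \<partial>lborel) = 1"
proof -
  interpret prob_space "density lborel (normal_density \<mu> \<sigma>)" by (rule prob_space_normal_density[OF assms])
  have "emeasure (density lborel (normal_density \<mu> \<sigma>)) UNIV = 1" using emeasure_space_1 by simp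
  then show ?thesis by (simp add: emeasure_density)
qed

lemma Sg_int:
  assumes d: "d > 0" and s: "\<sigma> > 0"
  shows "(\<integral>\<^sup>+z. Sg d \<sigma> (z + a) * indicator {-d/2..d/2} z \<partial>lborel) \<le> 1"
proof -
  have "(\<integral>\<^sup>+z. Sg d \<sigma> (z + a) * indicator {-d/2..d/2} z \<partial>lborel)
    = (\<integral>\<^sup>+z. (\<integral>\<^sup>+k. ennreal (normal_density 0 \<sigma> (d * of_int k - z - a)) \<partial>count_space UNIV) * indicator {-d/2..d/2} z \<partial>lborel)"
    unfolding Sg_def by (simp add: algebra_simps)
  also have "\<dots> \<le> (\<integral>\<^sup>+s. ennreal (normal_density 0 \<sigma> s) \<partial>lborel)"
    by (rule periodize[OF _ d]) measurable
  also have "\<dots> = 1" by (rule nn_integral_normal[OF s])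
  finally show ?thesis .
qed

lemma quad_int:
  assumes d: "d > 0"
  shows "(\<integral>\<^sup>+z. ennreal ((b + quant d (a + z) - a - z)\<^sup>2) * indicator {-d/2..d/2} z \<partial>lborel)
      \<le> ennreal (d * b\<^sup>2 + d^3/12)"
proof -
  let ?h = "\<lambda>u. ennreal ((b + u)\<^sup>2) * indicator {-d/2..d/2} u"
  have "(\<integral>\<^sup>+z. ennreal ((b + quant d (a + z) - a - z)\<^sup>2) * indicator {-d/2..d/2} z \<partial>lborel)
      \<le> (\<integral>\<^sup>+z. (\<integral>\<^sup>+k. ?h (d * of_int k - z - a) \<partial>count_space UNIV) * indicator {-d/2..d/2} z \<partial>lborel)"
  proof (intro nn_integral_mono mult_right_mono)
    fix z
    define k0 where "k0 = round ((a + z) / d)"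
    have q: "quant d (a + z) = d * of_int k0" by (simp add: quant_def k0_def)
    have "\<bar>of_int k0 - (a + z) / d\<bar> \<le> 1/2" unfolding k0_def by (rule of_int_round_abs_le)
    then have "\<bar>d * (of_int k0 - (a + z) / d)\<bar> \<le> d * (1/2)" using d by (simp add: abs_mult)
    moreover have "d * (of_int k0 - (a + z) / d) = d * of_int k0 - z - a" using d by (simp add: field_simps)
    ultimately have "\<bar>d * of_int k0 - z - a\<bar> \<le> d/2" by simp
    then have mem: "d * of_int k0 - z - a \<in> {-d/2..d/2}" by (simp only: atLeastAtMost_iff, linarith)
    have "?h (d * of_int k0 - z - a) = ennreal ((b + quant d (a + z) - a - z)\<^sup>2)"
      using mem by (simp add: q algebra_simps)
    then show "ennreal ((b + quant d (a + z) - a - z)\<^sup>2) \<le> (\<integral>\<^sup>+k. ?h (d * of_int k - z - a) \<partial>count_space UNIV)"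
      using ge_single_term[of "\<lambda>k. ?h (d * of_int k - z - a)" k0] by simp
  qed simp
  also have "\<dots> \<le> (\<integral>\<^sup>+s. ?h s \<partial>lborel)"
    by (rule periodize[OF _ d]) measurable
  also have "\<dots> = ennreal ((\<lambda>u. (b + u)^3/3) (d/2) - (\<lambda>u. (b + u)^3/3) (-d/2))"
    by (rule nn_integral_FTC_Icc) (auto intro!: derivative_eq_intros simp: d less_imp_le power2_eq_square)
  also have "(\<lambda>u. (b + u)^3/3) (d/2) - (\<lambda>u. (b + u)^3/3) (-d/2) = d * b\<^sup>2 + d^3/12"
    by (simp add: power3_eq_cube power2_eq_square field_simps)
  finally show ?thesis .
qed

lemma pmf_sum_le:
  fixes t :: "nat \<Rightarrow> real"
  assumes d: "d > 0" and s: "\<sigma> > 0" and fin: "\<And>i. i < n \<Longrightarrow> Sg d \<sigma> (t i) < \<infinity>"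
  shows "(\<integral>\<^sup>+y. ennreal (\<Prod>i<n. normal_density 0 \<sigma> (y!i - t i) / enn2real (Sg d \<sigma> (t i)))
           \<partial>count_space (lattice_vecs d n)) \<le> 1"
proof -
  define ft where "ft i k = normal_density 0 \<sigma> (d * of_int k - t i) / enn2real (Sg d \<sigma> (t i))" for i k
  have ft_nn: "0 \<le> ft i k" for i k unfolding ft_def by simp
  have ft_sum: "(\<integral>\<^sup>+k. ennreal (ft i k) \<partial>count_space UNIV) = 1" if "i < n" for i
  proof -
    have pos: "0 < Sg d \<sigma> (t i)" by (rule Sg_pos[OF s])
    have fi: "Sg d \<sigma> (t i) < \<infinity>" using fin that .
    have r: "0 < enn2real (Sg d \<sigma> (t i))" using pos fi by (simp add: enn2real_positive_iff)
    have "(\<integral>\<^sup>+k. ennreal (ft i k) \<partial>count_space UNIV)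
        = (\<integral>\<^sup>+k. ennreal (normal_density 0 \<sigma> (d * of_int k - t i)) / ennreal (enn2real (Sg d \<sigma> (t i))) \<partial>count_space UNIV)"
      unfolding ft_def using r by (intro nn_integral_cong) (simp add: divide_ennreal)
    also have "\<dots> = Sg d \<sigma> (t i) / ennreal (enn2real (Sg d \<sigma> (t i)))"
      by (subst nn_integral_divide) (auto simp: Sg_def)
    also have "\<dots> = 1" using pos fi by (simp add: ennreal_enn2real_if ennreal_divide_self)
    finally show ?thesis .
  qed
  define P where "P = Pi_pmf {..<n} (0::int) (\<lambda>i. embed_pmf (ft i))"
  define \<kappa> where "\<kappa> y = (\<lambda>i. if i < n then round (y!i / d) else (0::int))" for y :: "real list"
  have lat: "d * of_int (round (y!i / d)) = y!i" if "y \<in> lattice_vecs d n" "i < n" for y i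
  proof -
    from that have "y!i \<in> range (\<lambda>k::int. d * of_int k)" unfolding lattice_vecs_def by auto
    then obtain k where "y!i = d * of_int k" by auto
    then show ?thesis using d by simp
  qed
  have inj: "inj_on \<kappa> (lattice_vecs d n)"
  proof (rule inj_onI)
    fix y y' assume y: "y \<in> lattice_vecs d n" and y': "y' \<in> lattice_vecs d n" and e: "\<kappa> y = \<kappa> y'"
    show "y = y'"
    proof (rule nth_equalityI)
      show "length y = length y'" using y y' by (simp add: lattice_vecs_def)
      fix i assume "i < length y"
      then have i: "i < n" using y by (simp add: lattice_vecs_def)
      have "round (y!i/d) = round (y'!i/d)" using fun_cong[OF e, of i] i by (simp add: \<kappa>_def)
      then show "y!i = y'!i" using lat[OF y i] lat[OF y' i] by metis
    qed
  qed
  have pm: "pmf P (\<kappa> y) = (\<Prod>i<n. normal_density 0 \<sigma> (y!i - t i) / enn2real (Sg d \<sigma> (t i)))"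
    if y: "y \<in> lattice_vecs d n" for y
  proof -
    have "pmf P (\<kappa> y) = (\<Prod>i<n. pmf (embed_pmf (ft i)) (\<kappa> y i))"
      unfolding P_def by (rule pmf_Pi') (auto simp: \<kappa>_def)
    also have "\<dots> = (\<Prod>i<n. ft i (\<kappa> y i))"
      by (intro prod.cong refl pmf_embed_pmf ft_nn ft_sum) auto
    also have "\<dots> = (\<Prod>i<n. normal_density 0 \<sigma> (y!i - t i) / enn2real (Sg d \<sigma> (t i)))"
      by (intro prod.cong refl) (simp add: ft_def \<kappa>_def lat[OF y])
    finally show ?thesis .
  qed
  have "(\<integral>\<^sup>+y. ennreal (\<Prod>i<n. normal_density 0 \<sigma> (y!i - t i) / enn2real (Sg d \<sigma> (t i)))
           \<partial>count_space (lattice_vecs d n)) = (\<integral>\<^sup>+y. ennreal (pmf P (\<kappa> y)) \<partial>count_space (lattice_vecs d n))"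
    by (intro nn_integral_cong) (simp add: pm)
  also have "\<dots> = emeasure (measure_pmf P) (\<kappa> ` lattice_vecs d n)"
    by (rule nn_integral_pmf'[OF inj])
  also have "\<dots> \<le> 1" by (rule measure_pmf.emeasure_le_1)
  finally show ?thesis .
qed

lemma ac_count_pair:
  fixes H :: "'a \<Rightarrow> 'c \<times> 'b"
  assumes C: "countable C" and N: "sigma_finite_measure N"
    and H[measurable]: "H \<in> M \<rightarrow>\<^sub>M count_space C \<Otimes>\<^sub>M N"
    and ac: "absolutely_continuous N (distr M N (\<lambda>\<omega>. snd (H \<omega>)))"
  shows "absolutely_continuous (count_space C \<Otimes>\<^sub>M N) (distr M (count_space C \<Otimes>\<^sub>M N) H)"
  unfolding absolutely_continuous_def
proof
  interpret N: sigma_finite_measure N by fact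
  fix A assume A: "A \<in> null_sets (count_space C \<Otimes>\<^sub>M N)"
  then have As: "A \<in> sets (count_space C \<Otimes>\<^sub>M N)" by auto
  have "emeasure (count_space C \<Otimes>\<^sub>M N) A = (\<integral>\<^sup>+c. emeasure N (Pair c -` A) \<partial>count_space C)"
    by (rule N.emeasure_pair_measure_alt[OF As])
  then have "(\<integral>\<^sup>+c. emeasure N (Pair c -` A) \<partial>count_space C) = 0" using A by auto
  then have "AE c in count_space C. emeasure N (Pair c -` A) = 0"
    by (subst (asm) nn_integral_0_iff_AE) auto
  then have sl: "\<And>c. c \<in> C \<Longrightarrow> Pair c -` A \<in> null_sets N"
    using sets_Pair1[OF As] by (auto simp: AE_count_space)
  define U where "U = (\<Union>c\<in>C. Pair c -` A)"
  have U: "U \<in> null_sets N" unfolding U_def by (rule null_sets_UN'[OF C sl])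
  have Us: "U \<in> sets N" using U by auto
  have "U \<in> null_sets (distr M N (\<lambda>\<omega>. snd (H \<omega>)))" using ac U unfolding absolutely_continuous_def by auto
  then have "emeasure (distr M N (\<lambda>\<omega>. snd (H \<omega>))) U = 0" by auto
  moreover have "emeasure (distr M N (\<lambda>\<omega>. snd (H \<omega>))) U = emeasure M ((\<lambda>\<omega>. snd (H \<omega>)) -` U \<inter> space M)"
    by (rule emeasure_distr) (auto simp: Us)
  ultimately have U0: "emeasure M ((\<lambda>\<omega>. snd (H \<omega>)) -` U \<inter> space M) = 0" by simp
  have sub: "H -` A \<inter> space M \<subseteq> (\<lambda>\<omega>. snd (H \<omega>)) -` U \<inter> space M"
  proof
    fix \<omega> assume w: "\<omega> \<in> H -` A \<inter> space M"
    then have "H \<omega> \<in> space (count_space C \<Otimes>\<^sub>M N)" using measurable_space[OF H] by auto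
    then have "fst (H \<omega>) \<in> C" by (auto simp: space_pair_measure)
    moreover have "snd (H \<omega>) \<in> Pair (fst (H \<omega>)) -` A" using w by auto
    ultimately show "\<omega> \<in> (\<lambda>\<omega>. snd (H \<omega>)) -` U \<inter> space M" using w unfolding U_def by blast
  qed
  have "emeasure M (H -` A \<inter> space M) \<le> emeasure M ((\<lambda>\<omega>. snd (H \<omega>)) -` U \<inter> space M)"
    by (rule emeasure_mono[OF sub]) (use Us in measurable)
  then have "emeasure M (H -` A \<inter> space M) = 0" using U0 by simp
  then show "A \<in> null_sets (distr M (count_space C \<Otimes>\<^sub>M N) H)"
    using As by (simp add: null_sets_def emeasure_distr)
qed

lemma AE_RN_pos:
  assumes N: "sigma_finite_measure N" and H[measurable]: "H \<in> M \<rightarrow>\<^sub>M N"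
    and ac: "absolutely_continuous N (distr M N H)" and sf: "sigma_finite_measure (distr M N H)"
  shows "AE \<omega> in M. 0 < enn2real (RN_deriv N (distr M N H) (H \<omega>))"
proof -
  define R where "R = RN_deriv N (distr M N H)"
  have Rm[measurable]: "R \<in> borel_measurable N" unfolding R_def by simp
  have eq: "distr M N H = density N R"
    unfolding R_def by (rule sigma_finite_measure.density_RN_deriv[OF N ac, symmetric]) simp
  have fin: "AE x in N. R x \<noteq> \<infinity>"
    unfolding R_def by (rule sigma_finite_measure.RN_deriv_finite[OF N sf ac]) simp
  have "AE x in distr M N H. 0 < enn2real (R x)"
    unfolding eq using fin
    by (subst AE_density) (auto elim!: eventually_mono simp: enn2real_positive_iff less_top)
  then have "AE \<omega> in M. 0 < enn2real (R (H \<omega>))"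
    by (subst (asm) AE_distr_iff) auto
  then show ?thesis unfolding R_def .
qed

lemma int_le_nn:
  assumes P: "prob_space M" and f: "integrable M f" and le: "AE x in M. f x \<le> g x + c"
    and g[measurable]: "g \<in> borel_measurable M" and gnn: "\<And>x. 0 \<le> g x"
    and gi: "(\<integral>\<^sup>+x. ennreal (g x) \<partial>M) \<le> ennreal K" and K: "0 \<le> K"
  shows "integral\<^sup>L M f \<le> K + c"
proof -
  interpret prob_space M by fact
  have fm[measurable]: "f \<in> borel_measurable M" using f by auto
  have "integral\<^sup>L M f - c = integral\<^sup>L M (\<lambda>x. f x - c)"
    using f by (simp add: prob_space)
  also have "\<dots> \<le> integral\<^sup>L M (\<lambda>x. max (f x - c) 0)"
    using f by (intro integral_mono) auto
  also have "\<dots> = enn2real (\<integral>\<^sup>+x. ennreal (max (f x - c) 0) \<partial>M)"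
    by (rule integral_eq_nn_integral) auto
  also have "\<dots> \<le> enn2real (ennreal K)"
  proof (rule enn2real_mono)
    have "(\<integral>\<^sup>+x. ennreal (max (f x - c) 0) \<partial>M) \<le> (\<integral>\<^sup>+x. ennreal (g x) \<partial>M)"
      using le by (intro nn_integral_mono_AE) (auto elim!: eventually_mono intro!: ennreal_leI simp: gnn)
    then show "(\<integral>\<^sup>+x. ennreal (max (f x - c) 0) \<partial>M) \<le> ennreal K" using gi by simp
  qed simp
  finally show ?thesis using K by simp
qed

lemma sigma_vimage_eq:
  "f \<in> X \<rightarrow> space N \<Longrightarrow> sigma_sets X {f -` A \<inter> X | A. A \<in> sets N} = {f -` A \<inter> X | A. A \<in> sets N}"
  using sets_vimage_algebra[of X f N] sets_vimage_algebra2[of f X N] by simp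

lemma indep_nn_expect:
  assumes P: "prob_space M" and V[measurable]: "V \<in> M \<rightarrow>\<^sub>M PV" and Z[measurable]: "Z \<in> M \<rightarrow>\<^sub>M ZN"
    and ind: "prob_space.indep_set M {V -` A \<inter> space M | A. A \<in> sets PV} {Z -` B \<inter> space M | B. B \<in> sets ZN}"
    and f[measurable]: "f \<in> borel_measurable (PV \<Otimes>\<^sub>M ZN)"
  shows "(\<integral>\<^sup>+\<omega>. f (V \<omega>, Z \<omega>) \<partial>M) = (\<integral>\<^sup>+v. (\<integral>\<^sup>+z. f (v, z) \<partial>distr M ZN Z) \<partial>distr M PV V)"
proof -
  interpret prob_space M by fact
  interpret Vs: prob_space "distr M PV V" by (rule prob_space_distr) simp
  interpret Zs0: prob_space "distr M ZN Z" by (rule prob_space_distr) simp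
  have eq: "distr M PV V \<Otimes>\<^sub>M distr M ZN Z = distr M (PV \<Otimes>\<^sub>M ZN) (\<lambda>\<omega>. (V \<omega>, Z \<omega>))"
  proof (rule pair_measure_eqI)
    show "sigma_finite_measure (distr M PV V)" by (rule prob_space_imp_sigma_finite) (rule Vs.prob_space_axioms)
    show "sigma_finite_measure (distr M ZN Z)" by (rule prob_space_imp_sigma_finite) (rule Zs0.prob_space_axioms)
    show "sets (distr M PV V \<Otimes>\<^sub>M distr M ZN Z) = sets (distr M (PV \<Otimes>\<^sub>M ZN) (\<lambda>\<omega>. (V \<omega>, Z \<omega>)))"
      by (simp only: sets_pair_measure_cong[OF sets_distr sets_distr] sets_distr)
    fix A B assume A: "A \<in> sets (distr M PV V)" and B: "B \<in> sets (distr M ZN Z)"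
    then have A': "A \<in> sets PV" and B': "B \<in> sets ZN" by auto
    have ev: "V -` A \<inter> space M \<in> {V -` A \<inter> space M | A. A \<in> sets PV}" "Z -` B \<inter> space M \<in> {Z -` B \<inter> space M | B. B \<in> sets ZN}"
      using A' B' by blast+
    have "emeasure (distr M (PV \<Otimes>\<^sub>M ZN) (\<lambda>\<omega>. (V \<omega>, Z \<omega>))) (A \<times> B)
        = emeasure M ((\<lambda>\<omega>. (V \<omega>, Z \<omega>)) -` (A \<times> B) \<inter> space M)"
      using A' B' by (intro emeasure_distr) auto
    also have "(\<lambda>\<omega>. (V \<omega>, Z \<omega>)) -` (A \<times> B) \<inter> space M = (V -` A \<inter> space M) \<inter> (Z -` B \<inter> space M)" by auto
    also have "emeasure M \<dots> = ennreal (prob (V -` A \<inter> space M) * prob (Z -` B \<inter> space M))"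
      using indep_setD[OF ind ev] by (simp add: emeasure_eq_measure)
    also have "\<dots> = emeasure M (V -` A \<inter> space M) * emeasure M (Z -` B \<inter> space M)"
      by (simp add: emeasure_eq_measure ennreal_mult)
    also have "\<dots> = emeasure (distr M PV V) A * emeasure (distr M ZN Z) B"
      using A' B' by (simp add: emeasure_distr)
    finally show "emeasure (distr M PV V) A * emeasure (distr M ZN Z) B = emeasure (distr M (PV \<Otimes>\<^sub>M ZN) (\<lambda>\<omega>. (V \<omega>, Z \<omega>))) (A \<times> B)" by (rule sym)
  qed
  interpret Zs: prob_space "distr M ZN Z" by (rule prob_space_distr) simp
  have "(\<integral>\<^sup>+\<omega>. f (V \<omega>, Z \<omega>) \<partial>M) = (\<integral>\<^sup>+x. f x \<partial>distr M (PV \<Otimes>\<^sub>M ZN) (\<lambda>\<omega>. (V \<omega>, Z \<omega>)))"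
    by (rule nn_integral_distr[symmetric]) (simp_all)
  also have "\<dots> = (\<integral>\<^sup>+x. f x \<partial>(distr M PV V \<Otimes>\<^sub>M distr M ZN Z))" by (simp only: eq)
  also have "\<dots> = (\<integral>\<^sup>+v. (\<integral>\<^sup>+z. f (v, z) \<partial>distr M ZN Z) \<partial>distr M PV V)"
    by (rule Zs0.nn_integral_fst[symmetric])
       (use f in \<open>simp only: measurable_cong_sets[OF sets_pair_measure_cong[OF sets_distr sets_distr] refl]\<close>)
  finally show ?thesis .
qed

lemma measurable_count_pair:
  assumes C: "countable C" and G: "\<And>c. c \<in> C \<Longrightarrow> G c \<in> borel_measurable N"
  shows "(\<lambda>x. G (fst x) (snd x)) \<in> borel_measurable (count_space C \<Otimes>\<^sub>M N)"
proof -
  have "(\<lambda>x. (\<lambda>c x. G c (snd x)) (fst x) x) \<in> borel_measurable (count_space C \<Otimes>\<^sub>M N)"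
    by (rule measurable_compose_countable'[OF _ measurable_fst C])
       (rule measurable_compose[OF measurable_snd G], auto)
  then show ?thesis by simp
qed

lemma RN_mult_le:
  fixes R :: ennreal assumes "0 \<le> a"
  shows "R * ennreal (a / enn2real R) \<le> ennreal a"
proof (cases R)
  case (real r)
  then show ?thesis using assms
    by (cases "r = 0") (auto simp: ennreal_mult[symmetric] enn2real_ennreal)
qed simp

lemma log_normal:
  assumes s: "\<sigma> > 0"
  shows "- log 2 (normal_density 0 \<sigma> u) = u\<^sup>2 / (2 * \<sigma>\<^sup>2 * ln 2) + log 2 (2 * pi * \<sigma>\<^sup>2) / 2"
proof -
  have p: "0 < 2 * pi * \<sigma>\<^sup>2" using s by simp
  have "ln (normal_density 0 \<sigma> u) = - ln (2 * pi * \<sigma>\<^sup>2) / 2 - u\<^sup>2 / (2 * \<sigma>\<^sup>2)"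
    using p by (simp add: normal_density_def ln_mult ln_div ln_sqrt)
  then show ?thesis by (simp add: log_def field_simps)
qed

lemma log2_le: assumes "x > 0" shows "log 2 x \<le> (x - 1) / ln 2"
proof -
  have "ln x \<le> x - 1" using ln_le_minus_one[OF assms] .
  then show ?thesis unfolding log_def by (rule divide_right_mono) simp
qed

lemma gibbs_point:
  fixes p r \<sigma> d :: real and u s :: "nat \<Rightarrow> real"
  assumes p: "p > 0" and r: "r > 0" and sg: "\<sigma> > 0" and d: "d > 0" and sp: "\<And>i. i < n \<Longrightarrow> s i > 0"
  shows "- log 2 (p / r) \<le> (r * (\<Prod>i<n. normal_density 0 \<sigma> (u i) / s i) / p) / ln 2
        + (\<Sum>i<n. (u i)\<^sup>2) / (2 * \<sigma>\<^sup>2 * ln 2) + d / ln 2 * (\<Sum>i<n. s i)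
        + (-1 / ln 2 + real n * (log 2 (2*pi*\<sigma>\<^sup>2)/2 - 1/ln 2 - log 2 d))"
proof -
  define qv where "qv = (\<Prod>i<n. normal_density 0 \<sigma> (u i) / s i)"
  have ng: "0 < normal_density 0 \<sigma> x" for x by (rule normal_density_pos[OF sg])
  have fpos: "0 < normal_density 0 \<sigma> (u i) / s i" if "i < n" for i by (intro divide_pos_pos ng sp that)
  have qv: "qv > 0" unfolding qv_def by (intro prod_pos) (simp add: fpos)
  have h1: "- log 2 (p / r) = log 2 (r * qv / p) - log 2 qv"
    using p r qv by (simp add: log_divide log_mult)
  have h2: "log 2 (r * qv / p) \<le> (r * qv / p - 1) / ln 2" using p r qv by (intro log2_le) simp
  have "ln qv = (\<Sum>i<n. ln (normal_density 0 \<sigma> (u i) / s i))"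
    unfolding qv_def by (rule ln_prod) (simp, metis fpos lessThan_iff less_irrefl)
  also have "\<dots> = (\<Sum>i<n. ln (normal_density 0 \<sigma> (u i)) - ln (s i))"
  proof (rule sum.cong[OF refl])
    fix i assume "i \<in> {..<n}"
    then have "0 < s i" by (simp add: sp)
    then show "ln (normal_density 0 \<sigma> (u i) / s i) = ln (normal_density 0 \<sigma> (u i)) - ln (s i)"
      using ng[of "u i"] by (simp add: ln_div)
  qed
  finally have e: "ln qv = (\<Sum>i<n. ln (normal_density 0 \<sigma> (u i)) - ln (s i))" .
  have "- log 2 qv = (\<Sum>i<n. ln (s i) - ln (normal_density 0 \<sigma> (u i))) / ln 2"
    unfolding log_def e by (simp add: sum_subtractf diff_divide_distrib)
  also have "\<dots> = (\<Sum>i<n. - log 2 (normal_density 0 \<sigma> (u i)) + log 2 (s i))"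
    unfolding log_def sum_divide_distrib by (intro sum.cong refl) (simp add: diff_divide_distrib)
  finally have h3: "- log 2 qv = (\<Sum>i<n. - log 2 (normal_density 0 \<sigma> (u i)) + log 2 (s i))" .
  have h4: "log 2 (s i) \<le> (d * s i - 1) / ln 2 - log 2 d" if i: "i < n" for i
  proof -
    have "log 2 (s i) = log 2 (d * s i) - log 2 d" using d sp[OF i] by (simp add: log_mult)
    also have "log 2 (d * s i) \<le> (d * s i - 1) / ln 2" using d sp[OF i] by (intro log2_le) simp
    finally show ?thesis by simp
  qed
  have "- log 2 qv \<le> (\<Sum>i<n. (u i)\<^sup>2 / (2 * \<sigma>\<^sup>2 * ln 2) + log 2 (2*pi*\<sigma>\<^sup>2)/2 + ((d * s i - 1) / ln 2 - log 2 d))"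
    unfolding h3 by (intro sum_mono add_mono) (auto simp: log_normal[OF sg] h4)
  also have "\<dots> = (\<Sum>i<n. (u i)\<^sup>2) / (2 * \<sigma>\<^sup>2 * ln 2) + d / ln 2 * (\<Sum>i<n. s i)
        + real n * (log 2 (2*pi*\<sigma>\<^sup>2)/2 - 1/ln 2 - log 2 d)"
    by (simp add: sum.distrib sum_divide_distrib[symmetric] sum_distrib_left diff_divide_distrib sum_subtractf algebra_simps)
  finally have h5: "- log 2 qv \<le> (\<Sum>i<n. (u i)\<^sup>2) / (2 * \<sigma>\<^sup>2 * ln 2) + d / ln 2 * (\<Sum>i<n. s i)
        + real n * (log 2 (2*pi*\<sigma>\<^sup>2)/2 - 1/ln 2 - log 2 d)" .
  have "(r * qv / p - 1) / ln 2 = (r * qv / p) / ln 2 - 1 / ln 2" by (simp add: diff_divide_distrib)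
  with h1 h2 h5 show ?thesis unfolding qv_def[symmetric] by linarith
qed

lemma rhs_nonneg:
  fixes D D' :: real assumes "D > 0" "D' \<ge> 0"
  shows "0 \<le> real n / 2 * log 2 (pi * exp 1 / 6 * (D' / D + 1))"
proof -
  have e: "2 \<le> exp (1::real)" using exp_ge_add_one_self[of 1] by simp
  have p: "3 \<le> pi" using pi_gt3 by simp
  have "6 \<le> pi * exp 1" using mult_mono[OF p e] by simp
  then have a: "1 \<le> pi * exp 1 / 6" by simp
  have b: "1 \<le> D' / D + 1" using assms by simp
  have "1 \<le> pi * exp 1 / 6 * (D' / D + 1)" using mult_mono[OF a b] by simp
  then have "0 \<le> log 2 (pi * exp 1 / 6 * (D' / D + 1))" by simp
  then show ?thesis by simp
qed

lemma rhs_arith: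
  fixes D D' d \<sigma> :: real
  assumes D: "D > 0" and Dp: "D' \<ge> 0" and d2: "d\<^sup>2 = 12 * D" and d: "d > 0" and s2: "\<sigma>\<^sup>2 = D + D'" and s: "\<sigma> > 0"
  shows "1 / ln 2 + real n * (D + D') / (2 * \<sigma>\<^sup>2 * ln 2) + d / ln 2 * (real n * (1 / d))
       + (-1 / ln 2 + real n * (log 2 (2 * pi * \<sigma>\<^sup>2) / 2 - 1 / ln 2 - log 2 d))
       = real n / 2 * log 2 (pi * exp 1 / 6 * (D' / D + 1))"
proof -
  have arg: "pi * exp 1 / 6 * (D' / D + 1) = exp 1 * (2 * pi * \<sigma>\<^sup>2) / (d * d)"
    using D d2 s2 by (simp add: power2_eq_square[symmetric] field_simps)
  have pos: "0 < 2 * pi * \<sigma>\<^sup>2" using s by simp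
  have l: "log 2 (pi * exp 1 / 6 * (D' / D + 1)) = 1 / ln 2 + log 2 (2 * pi * \<sigma>\<^sup>2) - 2 * log 2 d"
  proof -
    have "ln (exp 1 * (2 * pi * \<sigma>\<^sup>2) / (d * d)) = ln (exp 1 * (2 * pi * \<sigma>\<^sup>2)) - ln (d * d)"
      using pos d s by (simp add: ln_div)
    also have "ln (exp 1 * (2 * pi * \<sigma>\<^sup>2)) = 1 + ln (2 * pi * \<sigma>\<^sup>2)" using pos s by (simp add: ln_mult)
    also have "ln (d * d) = 2 * ln d" using d by (simp add: ln_mult)
    finally have "ln (exp 1 * (2 * pi * \<sigma>\<^sup>2) / (d * d)) = 1 + ln (2 * pi * \<sigma>\<^sup>2) - 2 * ln d" .
    then show ?thesis unfolding arg log_def by (simp add: diff_divide_distrib add_divide_distrib)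
  qed
  have gen: "real n * t / (2 * t * ln 2) = real n / (2 * ln 2)" if "t > 0" for t :: real using that by (simp add: field_simps)
  have h1: "real n * (D + D') / (2 * \<sigma>\<^sup>2 * ln 2) = real n / (2 * ln 2)" unfolding s2 using D Dp by (intro gen) simp
  have h2: "d / ln 2 * (real n * (1 / d)) = real n / ln 2" using d by simp
  show ?thesis unfolding l h1 h2 by (simp add: field_simps)
qed

lemma div_le_mult: fixes x y :: ennreal assumes "x / ennreal c \<le> y" "c > 0" shows "x \<le> y * ennreal c"
proof -
  have "x = x / ennreal c * ennreal c" using assms(2) by (simp add: ennreal_divide_times ennreal_divide_self)
  also have "\<dots> \<le> y * ennreal c" using assms(1) by (rule mult_right_mono) simp
  finally show ?thesis .
qed

theorem mainTheorem7:
  fixes M :: "'a measure" and n :: nat and D D' :: real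
    and X :: "nat \<Rightarrow> 'a \<Rightarrow> real" and Xh :: "'a \<Rightarrow> real list" and Z :: "'a \<Rightarrow> real"
  assumes "prob_space M"
    and "D > 0" and "n > 0"
    and dens: "\<forall>i<n. \<exists>f. distributed M lborel (X i) f"
    and Xh_meas: "Xh \<in> measurable M (count_space UNIV)"
    and Xh_fin: "finite (Xh ` space M)"
    and Xh_len: "\<forall>\<omega>\<in>space M. length (Xh \<omega>) = n"
    and dist: "(\<integral>\<^sup>+ \<omega>. ennreal (\<Sum>i<n. (X i \<omega> - Xh \<omega> ! i)\<^sup>2) \<partial>M) / ennreal (real n) \<le> ennreal D'"
    and Z_unif: "distr M lborel Z = uniform_measure lborel {- (2 * sqrt (3 * D)) / 2 .. (2 * sqrt (3 * D)) / 2}"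
    and V_meas: "(\<lambda>\<omega>. ((\<lambda>i\<in>{..<n}. X i \<omega>), Xh \<omega>))
        \<in> measurable M (PiM {..<n} (\<lambda>_. lborel) \<Otimes>\<^sub>M count_space UNIV)"
    and Z_meas: "Z \<in> borel_measurable M"
    and indep: "prob_space.indep_set M
        {(\<lambda>\<omega>. ((\<lambda>i\<in>{..<n}. X i \<omega>), Xh \<omega>)) -` A \<inter> space M | A.
           A \<in> sets (PiM {..<n} (\<lambda>_. lborel) \<Otimes>\<^sub>M count_space UNIV)}
        {Z -` B \<inter> space M | B. B \<in> sets lborel}"
  shows "prob_space.conditional_entropy M 2
           (count_space (lattice_vecs (2 * sqrt (3 * D)) n))
           (count_space (Xh ` space M) \<Otimes>\<^sub>M lborel)
           (\<lambda>\<omega>. map (\<lambda>i. quant (2 * sqrt (3 * D)) (X i \<omega> + Z \<omega>)) [0..<n])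
           (\<lambda>\<omega>. (Xh \<omega>, Z \<omega>))
         \<le> real n / 2 * log 2 (pi * exp 1 / 6 * (D' / D + 1))"
proof -
  interpret prob_space M by fact
  define d where "d = 2 * sqrt (3 * D)"
  have d: "d > 0" using assms(2) by (simp add: d_def)
  have d2: "d\<^sup>2 = 12 * D" using assms(2) by (simp add: d_def power_mult_distrib)
  have Iint: "{- (2 * sqrt (3 * D)) / 2 .. (2 * sqrt (3 * D)) / 2} = {-d/2..d/2}" by (simp add: d_def)
  define F where "F = Xh ` space M"
  define L where "L = lattice_vecs d n"
  define X' where "X' i = (if i < n then X i else (\<lambda>_. 0::real))" for i
  have Xm[measurable]: "X' i \<in> borel_measurable M" for i
  proof (cases "i < n")
    case True
    then obtain f where "distributed M lborel (X i) f" using dens by auto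
    then have "X i \<in> M \<rightarrow>\<^sub>M lborel" by (rule distributed_measurable)
    then show ?thesis using True by (simp add: X'_def)
  qed (simp add: X'_def)
  have XX: "i < n \<Longrightarrow> X' i = X i" for i by (simp add: X'_def)
  define Y where "Y \<omega> = map (\<lambda>i. quant d (X' i \<omega> + Z \<omega>)) [0..<n]" for \<omega>
  define W where "W \<omega> = (Xh \<omega>, Z \<omega>)" for \<omega>
  have Yeq: "(\<lambda>\<omega>. map (\<lambda>i. quant (2 * sqrt (3 * D)) (X i \<omega> + Z \<omega>)) [0..<n]) = Y"
    by (auto simp: Y_def d_def XX intro!: ext)
  have Weq: "(\<lambda>\<omega>. (Xh \<omega>, Z \<omega>)) = W" by (simp add: W_def[abs_def])
  define S where "S = count_space L"
  define T where "T = count_space F \<Otimes>\<^sub>M (lborel :: real measure)"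
  have goal_eq: "prob_space.conditional_entropy M 2
           (count_space (lattice_vecs (2 * sqrt (3 * D)) n))
           (count_space (Xh ` space M) \<Otimes>\<^sub>M lborel)
           (\<lambda>\<omega>. map (\<lambda>i. quant (2 * sqrt (3 * D)) (X i \<omega> + Z \<omega>)) [0..<n])
           (\<lambda>\<omega>. (Xh \<omega>, Z \<omega>)) = conditional_entropy 2 S T Y W"
    unfolding Yeq Weq S_def T_def L_def F_def d_def ..
  have Zm[measurable]: "Z \<in> borel_measurable M" by (rule Z_meas)
  have Fin: "finite F" using Xh_fin by (simp add: F_def)
  have Lc: "countable L"
  proof -
    have "L \<subseteq> lists (range (\<lambda>k::int. d * of_int k))" by (auto simp: L_def lattice_vecs_def)
    moreover have "countable (lists (range (\<lambda>k::int. d * of_int k)))" by (intro countable_lists) auto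
    ultimately show ?thesis by (rule countable_subset)
  qed
  have Xhm[measurable]: "Xh \<in> M \<rightarrow>\<^sub>M count_space F"
    unfolding measurable_count_space_eq2[OF Fin]
  proof
    show "Xh \<in> space M \<rightarrow> F" by (auto simp: F_def)
    show "\<forall>a\<in>F. Xh -` {a} \<inter> space M \<in> sets M" using measurable_sets[OF Xh_meas] by auto
  qed
  have Ym[measurable]: "Y \<in> M \<rightarrow>\<^sub>M count_space L"
    unfolding measurable_count_space_eq_countable[OF Lc]
  proof
    have qr: "quant d x \<in> range (\<lambda>k::int. d * of_int k)" for x unfolding quant_def by (rule rangeI)
    show "Y \<in> space M \<rightarrow> L" using qr by (auto simp: Y_def L_def lattice_vecs_def)
    show "\<forall>a\<in>L. Y -` {a} \<inter> space M \<in> sets M"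
    proof
      fix a assume "a \<in> L" then have la: "length a = n" by (simp add: L_def lattice_vecs_def)
      have "Y \<omega> = a \<longleftrightarrow> (\<forall>i<n. quant d (X' i \<omega> + Z \<omega>) = a!i)" for \<omega>
        using la by (simp add: Y_def list_eq_iff_nth_eq)
      then have "Y -` {a} \<inter> space M = {\<omega> \<in> space M. \<forall>i<n. quant d (X' i \<omega> + Z \<omega>) = a!i}"
        by auto
      also have "\<dots> = {\<omega> \<in> space M. \<forall>i\<in>{..<n}. quant d (X' i \<omega> + Z \<omega>) = a!i}" by auto
      also have "\<dots> \<in> sets M"
      proof (rule sets.sets_Collect_finite_All)
        fix i
        have "(\<lambda>\<omega>. quant d (X' i \<omega> + Z \<omega>)) \<in> borel_measurable M" by measurable
        from measurable_sets[OF this, of "{a!i}"]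
        show "{\<omega> \<in> space M. quant d (X' i \<omega> + Z \<omega>) = a!i} \<in> sets M"
          by (simp add: vimage_def Int_def conj_commute)
      qed simp
      finally show "Y -` {a} \<inter> space M \<in> sets M" .
    qed
  qed
  have Wm[measurable]: "W \<in> M \<rightarrow>\<^sub>M T" unfolding T_def W_def[abs_def] by measurable
  have YWm[measurable]: "(\<lambda>\<omega>. (Y \<omega>, W \<omega>)) \<in> M \<rightarrow>\<^sub>M S \<Otimes>\<^sub>M T" unfolding S_def by measurable
  have sfS: "sigma_finite_measure S" unfolding S_def by (rule sigma_finite_measure_count_space_countable[OF Lc])
  have sfT: "sigma_finite_measure T" unfolding T_def
    by (intro sigma_finite_pair_measure sigma_finite_measure_count_space_finite[OF Fin] lborel.sigma_finite_measure_axioms)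
  have sfST: "sigma_finite_measure (S \<Otimes>\<^sub>M T)" by (intro sigma_finite_pair_measure sfS sfT)
  have Zd: "distr M lborel Z = uniform_measure lborel {-d/2..d/2}" using Z_unif by (simp only: Iint)
  have acZ: "absolutely_continuous lborel (distr M lborel Z)"
    unfolding Zd uniform_measure_def by (rule absolutely_continuousI_density) measurable
  have acT: "absolutely_continuous T (distr M T W)"
    unfolding T_def
    by (rule ac_count_pair[OF countable_finite[OF Fin] lborel.sigma_finite_measure_axioms])
       (use Wm in \<open>simp add: T_def\<close>, simp add: W_def acZ)
  have acST: "absolutely_continuous (S \<Otimes>\<^sub>M T) (distr M (S \<Otimes>\<^sub>M T) (\<lambda>\<omega>. (Y \<omega>, W \<omega>)))"
    unfolding S_def
    by (rule ac_count_pair[OF Lc sfT]) (use YWm in \<open>simp add: S_def\<close>, simp add: acT)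
  have Xhi[measurable]: "(\<lambda>\<omega>. Xh \<omega> ! i) \<in> borel_measurable M" for i
    by (rule measurable_compose[OF Xhm]) simp
  have nthm[measurable]: "(\<lambda>l::real list. l ! i) \<in> count_space UNIV \<rightarrow>\<^sub>M borel" for i by simp
  have sumeq: "(\<Sum>i<n. (X i \<omega> - Xh \<omega> ! i)\<^sup>2) = (\<Sum>i<n. (X' i \<omega> - Xh \<omega> ! i)\<^sup>2)" for \<omega>
    by (rule sum.cong) (auto simp: XX)
  have dist': "(\<integral>\<^sup>+ \<omega>. ennreal (\<Sum>i<n. (X' i \<omega> - Xh \<omega> ! i)\<^sup>2) \<partial>M) / ennreal (real n) \<le> ennreal D'"
    using dist by (simp add: sumeq)
  have Dp: "D' \<ge> 0"
  proof (rule ccontr)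
    assume "\<not> D' \<ge> 0"
    then have "ennreal D' = 0" by (intro ennreal_neg) simp
    with dist' have "(\<integral>\<^sup>+ \<omega>. ennreal (\<Sum>i<n. (X' i \<omega> - Xh \<omega> ! i)\<^sup>2) \<partial>M) / ennreal (real n) = 0" by simp
    then have "(\<integral>\<^sup>+ \<omega>. ennreal (\<Sum>i<n. (X' i \<omega> - Xh \<omega> ! i)\<^sup>2) \<partial>M) = 0"
      by (simp add: ennreal_divide_eq_0_iff)
    then have "AE \<omega> in M. ennreal (\<Sum>i<n. (X' i \<omega> - Xh \<omega> ! i)\<^sup>2) = 0"
      by (subst (asm) nn_integral_0_iff_AE) auto
    then have AE0: "AE \<omega> in M. X' 0 \<omega> \<in> (\<lambda>l. l ! 0) ` F"
      using AE_space
    proof (eventually_elim)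
      case (elim \<omega>)
      have le: "(\<Sum>i<n. (X' i \<omega> - Xh \<omega> ! i)\<^sup>2) \<le> 0" using elim(1) by (simp only: ennreal_eq_0_iff)
      have ge: "0 \<le> (\<Sum>i<n. (X' i \<omega> - Xh \<omega> ! i)\<^sup>2)" by (intro sum_nonneg) simp
      from le ge have "(\<Sum>i<n. (X' i \<omega> - Xh \<omega> ! i)\<^sup>2) = 0" by linarith
      then have "(X' 0 \<omega> - Xh \<omega> ! 0)\<^sup>2 = 0" using assms(3)
        by (subst (asm) sum_nonneg_eq_0_iff) auto
      then have "X' 0 \<omega> = Xh \<omega> ! 0" by simp
      then show ?case using elim(2) by (auto simp: F_def)
    qed
    obtain f0 where f0: "distributed M lborel (X 0) f0" using dens assms(3) by auto
    have A0n: "(\<lambda>l. l ! 0) ` F \<in> null_sets lborel"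
      by (intro countable_imp_null_set_lborel countable_finite finite_imageI Fin)
    have "(\<lambda>l. l ! 0) ` F \<in> null_sets (distr M lborel (X 0))"
      using A0n distributed_distr_eq_density[OF f0] absolutely_continuousI_density[OF distributed_borel_measurable[OF f0]]
      unfolding absolutely_continuous_def by auto
    then have "X 0 -` ((\<lambda>l. l ! 0) ` F) \<inter> space M \<in> null_sets M"
      using distributed_measurable[OF f0] by (auto simp: null_sets_def emeasure_distr)
    then have "AE \<omega> in M. \<omega> \<notin> X 0 -` ((\<lambda>l. l ! 0) ` F) \<inter> space M" by (rule AE_not_in)
    with AE0 AE_space have "AE \<omega> in M. False" by eventually_elim (auto simp: XX[OF assms(3)])
    then show False by simp
  qed
  define \<sigma> where "\<sigma> = sqrt (D + D')"
  have s: "\<sigma> > 0" using Dp assms(2) by (simp add: \<sigma>_def)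
  have s2: "\<sigma>\<^sup>2 = D + D'" using Dp assms(2) by (simp add: \<sigma>_def)
  define PV where "PV = (PiM {..<n} (\<lambda>_. lborel) \<Otimes>\<^sub>M count_space UNIV :: ((nat \<Rightarrow> real) \<times> real list) measure)"
  define V where "V \<omega> = ((\<lambda>i\<in>{..<n}. X i \<omega>), Xh \<omega>)" for \<omega>
  have Vm[measurable]: "V \<in> M \<rightarrow>\<^sub>M PV" using V_meas by (simp add: V_def[abs_def] PV_def)
  have ind: "indep_set {V -` A \<inter> space M | A. A \<in> sets PV} {Z -` B \<inter> space M | B. B \<in> sets lborel}"
    using indep by (simp add: V_def[abs_def] PV_def)
  have Zm': "Z \<in> M \<rightarrow>\<^sub>M lborel" by simp
  have expV: "(\<integral>\<^sup>+\<omega>. f (V \<omega>, Z \<omega>) \<partial>M) = (\<integral>\<^sup>+v. (\<integral>\<^sup>+z. f (v, z) \<partial>uniform_measure lborel {-d/2..d/2}) \<partial>distr M PV V)"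
    if "f \<in> borel_measurable (PV \<Otimes>\<^sub>M lborel)" for f
    using indep_nn_expect[OF prob_space_axioms Vm Zm' ind that] Zd by simp
  have unif: "(\<integral>\<^sup>+z. g z \<partial>uniform_measure lborel {-d/2..d/2}) = (\<integral>\<^sup>+z. g z * indicator {-d/2..d/2} z \<partial>lborel) / ennreal d"
    if "g \<in> borel_measurable borel" for g :: "real \<Rightarrow> ennreal"
    using that d by (subst nn_integral_uniform_measure) auto
  have PVprob: "prob_space (distr M PV V)" by (rule prob_space_distr) simp
  have E3: "(\<integral>\<^sup>+\<omega>. Sg d \<sigma> (Z \<omega> + Xh \<omega> ! i) \<partial>M) \<le> ennreal (1/d)" for i
  proof -
    have "(\<integral>\<^sup>+\<omega>. Sg d \<sigma> (Z \<omega> + Xh \<omega> ! i) \<partial>M) = (\<integral>\<^sup>+\<omega>. (\<lambda>(v,z). Sg d \<sigma> (z + snd v ! i)) (V \<omega>, Z \<omega>) \<partial>M)"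
      by (simp add: V_def)
    also have "\<dots> = (\<integral>\<^sup>+v. (\<integral>\<^sup>+z. Sg d \<sigma> (z + snd v ! i) \<partial>uniform_measure lborel {-d/2..d/2}) \<partial>distr M PV V)"
      by (subst expV) (auto simp: PV_def)
    also have "\<dots> \<le> (\<integral>\<^sup>+v. ennreal (1/d) \<partial>distr M PV V)"
    proof (rule nn_integral_mono)
      fix v :: "(nat \<Rightarrow> real) \<times> real list"
      have "(\<integral>\<^sup>+z. Sg d \<sigma> (z + snd v ! i) \<partial>uniform_measure lborel {-d/2..d/2})
          = (\<integral>\<^sup>+z. Sg d \<sigma> (z + snd v ! i) * indicator {-d/2..d/2} z \<partial>lborel) / ennreal d"
        by (rule unif) simp
      also have "\<dots> \<le> 1 / ennreal d" by (rule divide_right_mono_ennreal) (rule Sg_int[OF d s])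
      also have "\<dots> = ennreal (1/d)" using d by (simp add: divide_ennreal[symmetric])
      finally show "(\<integral>\<^sup>+z. Sg d \<sigma> (z + snd v ! i) \<partial>uniform_measure lborel {-d/2..d/2}) \<le> ennreal (1/d)" .
    qed
    also have "\<dots> = ennreal (1/d)" using prob_space.emeasure_space_1[OF PVprob] by simp
    finally show ?thesis .
  qed
  have fstm: "(\<lambda>x. f (\<Sum>i<n. g i (fst (fst x) i) (snd (fst x)) (snd x))) \<in> borel_measurable (PV \<Otimes>\<^sub>M lborel)"
    if fm: "f \<in> borel_measurable borel" and gm: "\<And>i. i < n \<Longrightarrow> (\<lambda>(a, l, z). g i a l z) \<in> borel_measurable (lborel \<Otimes>\<^sub>M count_space UNIV \<Otimes>\<^sub>M lborel)"
    for f :: "real \<Rightarrow> ennreal" and g :: "nat \<Rightarrow> real \<Rightarrow> real list \<Rightarrow> real \<Rightarrow> real"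
  proof -
    have "(\<lambda>x. g i (fst (fst x) i) (snd (fst x)) (snd x)) \<in> borel_measurable (PV \<Otimes>\<^sub>M lborel)" if i: "i < n" for i
    proof -
      have "(\<lambda>x. (fst (fst x) i, snd (fst x), snd x)) \<in> (PV \<Otimes>\<^sub>M lborel) \<rightarrow>\<^sub>M (lborel \<Otimes>\<^sub>M count_space UNIV \<Otimes>\<^sub>M lborel)"
      proof (intro measurable_Pair)
        show "(\<lambda>x. fst (fst x) i) \<in> PV \<Otimes>\<^sub>M lborel \<rightarrow>\<^sub>M lborel" unfolding PV_def
          by (rule measurable_compose[OF measurable_compose[OF measurable_fst measurable_fst] measurable_component_singleton]) (simp add: i)
        show "(\<lambda>x. snd (fst x)) \<in> PV \<Otimes>\<^sub>M lborel \<rightarrow>\<^sub>M count_space UNIV" unfolding PV_def by measurable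
        show "(\<lambda>x. snd x) \<in> PV \<Otimes>\<^sub>M lborel \<rightarrow>\<^sub>M lborel" by measurable
      qed
      from measurable_compose[OF this gm[OF i]] show ?thesis by simp
    qed
    then show ?thesis by (intro measurable_compose[OF _ fm] borel_measurable_sum) auto
  qed
  have E2: "(\<integral>\<^sup>+\<omega>. ennreal (\<Sum>i<n. (Y \<omega> ! i - Z \<omega> - Xh \<omega> ! i)\<^sup>2) \<partial>M) \<le> ennreal (real n * (D + D'))"
  proof -
    let ?f = "\<lambda>x::((nat \<Rightarrow> real) \<times> real list) \<times> real. ennreal (\<Sum>i<n. (quant d (fst (fst x) i + snd x) - snd x - snd (fst x) ! i)\<^sup>2)"
    have fm: "?f \<in> borel_measurable (PV \<Otimes>\<^sub>M lborel)"
      by (rule fstm[of ennreal "\<lambda>i a l z. (quant d (a + z) - z - l ! i)\<^sup>2", simplified]) measurable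
    have "(\<integral>\<^sup>+\<omega>. ennreal (\<Sum>i<n. (Y \<omega> ! i - Z \<omega> - Xh \<omega> ! i)\<^sup>2) \<partial>M) = (\<integral>\<^sup>+\<omega>. ?f (V \<omega>, Z \<omega>) \<partial>M)"
      by (intro nn_integral_cong arg_cong[where f=ennreal] sum.cong) (auto simp: V_def Y_def XX)
    also have "\<dots> = (\<integral>\<^sup>+v. (\<integral>\<^sup>+z. ?f (v, z) \<partial>uniform_measure lborel {-d/2..d/2}) \<partial>distr M PV V)"
      using expV[OF fm] by simp
    also have "\<dots> \<le> (\<integral>\<^sup>+v. ennreal ((\<Sum>i<n. (fst v i - snd v ! i)\<^sup>2) + real n * D) \<partial>distr M PV V)"
    proof (rule nn_integral_mono)
      fix v :: "(nat \<Rightarrow> real) \<times> real list"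
      have m1: "(\<lambda>z. ?f (v, z)) \<in> borel_measurable borel" by (simp only: fst_conv snd_conv) measurable
      have "(\<integral>\<^sup>+z. ?f (v, z) * indicator {-d/2..d/2} z \<partial>lborel)
          = (\<integral>\<^sup>+z. (\<Sum>i<n. ennreal ((quant d (fst v i + z) - z - snd v ! i)\<^sup>2) * indicator {-d/2..d/2} z) \<partial>lborel)"
        by (intro nn_integral_cong, subst sum_distrib_right[symmetric], subst sum_ennreal) auto
      also have "\<dots> = (\<Sum>i<n. (\<integral>\<^sup>+z. ennreal ((quant d (fst v i + z) - z - snd v ! i)\<^sup>2) * indicator {-d/2..d/2} z \<partial>lborel))"
        by (rule nn_integral_sum) simp
      also have "\<dots> \<le> (\<Sum>i<n. ennreal (d * (fst v i - snd v ! i)\<^sup>2 + d^3/12))"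
      proof (rule sum_mono)
        fix i
        have "(\<integral>\<^sup>+z. ennreal ((quant d (fst v i + z) - z - snd v ! i)\<^sup>2) * indicator {-d/2..d/2} z \<partial>lborel)
            = (\<integral>\<^sup>+z. ennreal (((fst v i - snd v ! i) + quant d (fst v i + z) - fst v i - z)\<^sup>2) * indicator {-d/2..d/2} z \<partial>lborel)"
          by (intro nn_integral_cong) (simp add: algebra_simps)
        also have "\<dots> \<le> ennreal (d * (fst v i - snd v ! i)\<^sup>2 + d^3/12)" by (rule quad_int[OF d])
        finally show "(\<integral>\<^sup>+z. ennreal ((quant d (fst v i + z) - z - snd v ! i)\<^sup>2) * indicator {-d/2..d/2} z \<partial>lborel)
            \<le> ennreal (d * (fst v i - snd v ! i)\<^sup>2 + d^3/12)" .
      qed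
      also have "\<dots> = ennreal (\<Sum>i<n. d * (fst v i - snd v ! i)\<^sup>2 + d^3/12)"
        using d by (intro sum_ennreal) simp
      finally have hl: "(\<integral>\<^sup>+z. ?f (v, z) * indicator {-d/2..d/2} z \<partial>lborel) \<le> ennreal (\<Sum>i<n. d * (fst v i - snd v ! i)\<^sup>2 + d^3/12)" .
      have "(\<integral>\<^sup>+z. ?f (v, z) \<partial>uniform_measure lborel {-d/2..d/2})
          = (\<integral>\<^sup>+z. ?f (v, z) * indicator {-d/2..d/2} z \<partial>lborel) / ennreal d"
        by (rule unif[OF m1])
      also have "\<dots> \<le> ennreal (\<Sum>i<n. d * (fst v i - snd v ! i)\<^sup>2 + d^3/12) / ennreal d"
        using hl by (rule divide_right_mono_ennreal)
      also have "\<dots> = ennreal ((\<Sum>i<n. d * (fst v i - snd v ! i)\<^sup>2 + d^3/12) / d)"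
        using d by (intro divide_ennreal) (auto intro!: sum_nonneg)
      also have "(\<Sum>i<n. d * (fst v i - snd v ! i)\<^sup>2 + d^3/12) / d = (\<Sum>i<n. (fst v i - snd v ! i)\<^sup>2) + real n * D"
      proof -
        have "(\<Sum>i<n. d * (fst v i - snd v ! i)\<^sup>2 + d^3/12) / d = (\<Sum>i<n. (fst v i - snd v ! i)\<^sup>2 + d\<^sup>2/12)"
          unfolding sum_divide_distrib using d by (intro sum.cong refl) (simp add: field_simps power2_eq_square power3_eq_cube)
        also have "\<dots> = (\<Sum>i<n. (fst v i - snd v ! i)\<^sup>2) + real n * D" using d2 by (simp add: sum.distrib)
        finally show ?thesis .
      qed
      finally show "(\<integral>\<^sup>+z. ?f (v, z) \<partial>uniform_measure lborel {-d/2..d/2})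
          \<le> ennreal ((\<Sum>i<n. (fst v i - snd v ! i)\<^sup>2) + real n * D)" .
    qed
    also have "\<dots> = (\<integral>\<^sup>+\<omega>. ennreal ((\<Sum>i<n. (X' i \<omega> - Xh \<omega> ! i)\<^sup>2) + real n * D) \<partial>M)"
    proof -
      have m: "(\<lambda>v::(nat \<Rightarrow> real) \<times> real list. ennreal ((\<Sum>i<n. (fst v i - snd v ! i)\<^sup>2) + real n * D)) \<in> borel_measurable PV"
      proof -
        have "(\<lambda>x::((nat \<Rightarrow> real) \<times> real list) \<times> real. (\<lambda>s. ennreal (s + real n * D)) (\<Sum>i<n. (\<lambda>a l z. (a - l ! i)\<^sup>2) (fst (fst x) i) (snd (fst x)) (snd x)))
           \<in> borel_measurable (PV \<Otimes>\<^sub>M lborel)"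
          by (rule fstm[of "\<lambda>s. ennreal (s + real n * D)" "\<lambda>i a l z. (a - l ! i)\<^sup>2"]) measurable
        from measurable_compose[OF measurable_Pair[OF measurable_ident_sets[OF refl] measurable_const[of 0]] this]
        show ?thesis by (simp add: PV_def)
      qed
      have m': "(\<lambda>v::(nat \<Rightarrow> real) \<times> real list. ennreal ((\<Sum>i<n. (fst v i - snd v ! i)\<^sup>2) + real n * D)) \<in> borel_measurable (distr M PV V)"
        using m by (simp only: measurable_cong_sets[OF sets_distr refl])
      show ?thesis by (subst nn_integral_distr[OF Vm m']) (intro nn_integral_cong arg_cong[where f=ennreal], auto simp: V_def XX intro!: sum.cong)
    qed
    also have "\<dots> = (\<integral>\<^sup>+\<omega>. ennreal (\<Sum>i<n. (X' i \<omega> - Xh \<omega> ! i)\<^sup>2) \<partial>M) + ennreal (real n * D)"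
      using assms(2) by (subst ennreal_plus) (auto intro!: sum_nonneg simp: nn_integral_add emeasure_space_1)
    also have "\<dots> \<le> ennreal D' * ennreal (real n) + ennreal (real n * D)"
      using div_le_mult[OF dist'] assms(3) by (intro add_mono) auto
    also have "\<dots> = ennreal (real n * (D + D'))"
      using Dp assms(2) by (simp add: ennreal_mult[symmetric] ennreal_plus[symmetric] algebra_simps del: ennreal_plus)
    finally show ?thesis .
  qed
  define RNp where "RNp = RN_deriv (S \<Otimes>\<^sub>M T) (distr M (S \<Otimes>\<^sub>M T) (\<lambda>\<omega>. (Y \<omega>, W \<omega>)))"
  define RNr where "RNr = RN_deriv T (distr M T W)"
  have RNpm[measurable]: "RNp \<in> borel_measurable (S \<Otimes>\<^sub>M T)" unfolding RNp_def by simp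
  have RNrm[measurable]: "RNr \<in> borel_measurable T" unfolding RNr_def by simp
  have CEeq: "conditional_entropy 2 S T Y W = - (\<integral>\<omega>. log 2 (enn2real (RNp (Y \<omega>, W \<omega>)) / enn2real (RNr (W \<omega>))) \<partial>M)"
    unfolding conditional_entropy_def RNp_def[symmetric] RNr_def[symmetric]
    by (subst integral_distr) auto
  have probST: "prob_space (distr M (S \<Otimes>\<^sub>M T) (\<lambda>\<omega>. (Y \<omega>, W \<omega>)))" by (rule prob_space_distr) simp
  have probT: "prob_space (distr M T W)" by (rule prob_space_distr) simp
  have AEp: "AE \<omega> in M. 0 < enn2real (RNp (Y \<omega>, W \<omega>))"
    unfolding RNp_def by (rule AE_RN_pos[OF sfST YWm acST prob_space_imp_sigma_finite[OF probST]])
  have AEr: "AE \<omega> in M. 0 < enn2real (RNr (W \<omega>))"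
    unfolding RNr_def by (rule AE_RN_pos[OF sfT Wm acT prob_space_imp_sigma_finite[OF probT]])
  have AEs: "AE \<omega> in M. \<forall>i\<in>{..<n}. Sg d \<sigma> (Z \<omega> + Xh \<omega> ! i) \<noteq> \<infinity>"
  proof (rule eventually_ball_finite, simp, rule ballI)
    fix i
    show "AE \<omega> in M. Sg d \<sigma> (Z \<omega> + Xh \<omega> ! i) \<noteq> \<infinity>"
      by (rule nn_integral_noteq_infinite) (use E3[of i] in \<open>auto simp: top_unique\<close>)
  qed
  define qf where "qf y w = (if \<forall>i<n. Sg d \<sigma> (snd w + fst w ! i) < \<infinity>
      then (\<Prod>i<n. normal_density 0 \<sigma> (y!i - (snd w + fst w ! i)) / enn2real (Sg d \<sigma> (snd w + fst w ! i))) else 0)"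
    for y :: "real list" and w :: "real list \<times> real"
  have qf_nn: "0 \<le> qf y w" for y w by (auto simp: qf_def intro!: prod_nonneg)
  have qfT: "qf y \<in> borel_measurable T" for y
  proof -
    have "(\<lambda>w. (\<lambda>a z. qf y (a, z)) (fst w) (snd w)) \<in> borel_measurable (count_space F \<Otimes>\<^sub>M lborel)"
      by (rule measurable_count_pair[OF countable_finite[OF Fin]]) (unfold qf_def fst_conv snd_conv, measurable)
    then show ?thesis by (simp add: T_def)
  qed
  have qfm[measurable]: "(\<lambda>x. qf (fst x) (snd x)) \<in> borel_measurable (S \<Otimes>\<^sub>M T)"
    unfolding S_def by (rule measurable_count_pair[OF Lc qfT])
  define B where "B \<omega> = enn2real (RNr (W \<omega>)) * qf (Y \<omega>) (W \<omega>) / enn2real (RNp (Y \<omega>, W \<omega>))" for \<omega>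
  have hm: "(\<lambda>x. enn2real (RNr (snd x)) * qf (fst x) (snd x) / enn2real (RNp x)) \<in> borel_measurable (S \<Otimes>\<^sub>M T)"
    by measurable
  have Bm[measurable]: "B \<in> borel_measurable M"
    using measurable_compose[OF YWm hm] by (simp add: B_def[abs_def])
  have E1: "(\<integral>\<^sup>+\<omega>. ennreal (B \<omega>) \<partial>M) \<le> 1"
  proof -
    interpret ST: pair_sigma_finite S T by (intro pair_sigma_finite.intro sfS sfT)
    have "(\<integral>\<^sup>+\<omega>. ennreal (B \<omega>) \<partial>M) = (\<integral>\<^sup>+x. ennreal (enn2real (RNr (snd x)) * qf (fst x) (snd x) / enn2real (RNp x)) \<partial>distr M (S \<Otimes>\<^sub>M T) (\<lambda>\<omega>. (Y \<omega>, W \<omega>)))"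
      using hm by (subst nn_integral_distr) (auto simp: B_def)
    also have "distr M (S \<Otimes>\<^sub>M T) (\<lambda>\<omega>. (Y \<omega>, W \<omega>)) = density (S \<Otimes>\<^sub>M T) RNp"
      unfolding RNp_def by (rule sigma_finite_measure.density_RN_deriv[OF sfST acST, symmetric]) simp
    also have "(\<integral>\<^sup>+x. ennreal (enn2real (RNr (snd x)) * qf (fst x) (snd x) / enn2real (RNp x)) \<partial>density (S \<Otimes>\<^sub>M T) RNp)
        = (\<integral>\<^sup>+x. RNp x * ennreal (enn2real (RNr (snd x)) * qf (fst x) (snd x) / enn2real (RNp x)) \<partial>(S \<Otimes>\<^sub>M T))"
      using hm by (intro nn_integral_density) auto
    also have "\<dots> \<le> (\<integral>\<^sup>+x. ennreal (enn2real (RNr (snd x)) * qf (fst x) (snd x)) \<partial>(S \<Otimes>\<^sub>M T))"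
      by (intro nn_integral_mono RN_mult_le) (simp add: qf_nn)
    also have "\<dots> = (\<integral>\<^sup>+w. (\<integral>\<^sup>+y. ennreal (enn2real (RNr w) * qf y w) \<partial>S) \<partial>T)"
      by (subst ST.nn_integral_snd[symmetric]) auto
    also have "\<dots> \<le> (\<integral>\<^sup>+w. RNr w \<partial>T)"
    proof (rule nn_integral_mono)
      fix w :: "real list \<times> real"
      have "(\<integral>\<^sup>+y. ennreal (enn2real (RNr w) * qf y w) \<partial>S) = ennreal (enn2real (RNr w)) * (\<integral>\<^sup>+y. ennreal (qf y w) \<partial>S)"
        by (subst nn_integral_cmult[symmetric]) (auto simp: ennreal_mult qf_nn S_def intro!: nn_integral_cong)
      also have "(\<integral>\<^sup>+y. ennreal (qf y w) \<partial>S) \<le> 1"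
      proof (cases "\<forall>i<n. Sg d \<sigma> (snd w + fst w ! i) < \<infinity>")
        case True
        then show ?thesis using pmf_sum_le[OF d s, of n "\<lambda>i. snd w + fst w ! i"] by (simp add: qf_def S_def L_def)
      next
        case False then have "qf y w = 0" for y by (simp only: qf_def if_not_P[OF False] if_False)
        then show ?thesis by simp
      qed
      then have "ennreal (enn2real (RNr w)) * (\<integral>\<^sup>+y. ennreal (qf y w) \<partial>S) \<le> ennreal (enn2real (RNr w)) * 1"
        by (rule mult_left_mono) simp
      also have "\<dots> \<le> RNr w" by (cases "RNr w") auto
      finally show "(\<integral>\<^sup>+y. ennreal (enn2real (RNr w) * qf y w) \<partial>S) \<le> RNr w" .
    qed
    also have "(\<integral>\<^sup>+w. RNr w \<partial>T) = 1"
    proof -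
      have eqT: "distr M T W = density T RNr"
        unfolding RNr_def by (rule sigma_finite_measure.density_RN_deriv[OF sfT acT, symmetric]) simp
      have "(\<integral>\<^sup>+w. RNr w \<partial>T) = (\<integral>\<^sup>+w. RNr w * indicator (space T) w \<partial>T)"
        by (intro nn_integral_cong) simp
      also have "\<dots> = emeasure (density T RNr) (space T)" by (rule emeasure_density[symmetric]) auto
      also have "\<dots> = emeasure (distr M T W) (space (distr M T W))" by (simp add: eqT)
      also have "\<dots> = 1" by (rule prob_space.emeasure_space_1[OF probT])
      finally show ?thesis .
    qed
    finally show ?thesis .
  qed
  have Yi[measurable]: "(\<lambda>\<omega>. Y \<omega> ! i) \<in> borel_measurable M" for i
    by (rule measurable_compose[OF Ym]) simp
  have main: "conditional_entropy 2 S T Y W \<le> real n / 2 * log 2 (pi * exp 1 / 6 * (D' / D + 1))"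
  proof -
    define A where "A \<omega> = log 2 (enn2real (RNp (Y \<omega>, W \<omega>)) / enn2real (RNr (W \<omega>)))" for \<omega>
    define K0 where "K0 = -1 / ln 2 + real n * (log 2 (2 * pi * \<sigma>\<^sup>2) / 2 - 1 / ln 2 - log 2 d)"
    define P where "P \<omega> = B \<omega> / ln 2 + (\<Sum>i<n. (Y \<omega> ! i - Z \<omega> - Xh \<omega> ! i)\<^sup>2) / (2 * \<sigma>\<^sup>2 * ln 2)
        + d / ln 2 * (\<Sum>i<n. enn2real (Sg d \<sigma> (Z \<omega> + Xh \<omega> ! i)))" for \<omega>
    define K where "K = 1 / ln 2 + real n * (D + D') / (2 * \<sigma>\<^sup>2 * ln 2) + d / ln 2 * (real n * (1 / d))"
    have RHS: "K + K0 = real n / 2 * log 2 (pi * exp 1 / 6 * (D' / D + 1))"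
      unfolding K_def K0_def by (rule rhs_arith[OF assms(2) Dp d2 d s2 s])
    have CE: "conditional_entropy 2 S T Y W = - integral\<^sup>L M A" using CEeq by (simp add: A_def[abs_def])
    show ?thesis
    proof (cases "integrable M A")
      case False
      then have "integral\<^sup>L M A = 0" by (rule not_integrable_integral_eq)
      then show ?thesis using CE rhs_nonneg[OF assms(2) Dp, of n] by simp
    next
      case True
      have "- integral\<^sup>L M A = integral\<^sup>L M (\<lambda>\<omega>. - A \<omega>)" by simp
      also have "\<dots> \<le> K + K0"
      proof (rule int_le_nn[OF prob_space_axioms])
        show "integrable M (\<lambda>\<omega>. - A \<omega>)" using True by simp
        show "AE \<omega> in M. - A \<omega> \<le> P \<omega> + K0"
          using AEp AEr AEs
        proof eventually_elim
          case (elim \<omega>)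
          define s' where "s' i = enn2real (Sg d \<sigma> (Z \<omega> + Xh \<omega> ! i))" for i
          have spos: "s' i > 0" if "i < n" for i
            using elim(3) that Sg_pos[OF s, of d "Z \<omega> + Xh \<omega> ! i"] by (auto simp: s'_def enn2real_positive_iff less_top)
          have fin: "\<forall>i<n. Sg d \<sigma> (snd (W \<omega>) + fst (W \<omega>) ! i) < \<infinity>" using elim(3) by (auto simp: W_def less_top)
          have qv: "qf (Y \<omega>) (W \<omega>) = (\<Prod>i<n. normal_density 0 \<sigma> (Y \<omega> ! i - Z \<omega> - Xh \<omega> ! i) / s' i)"
            using fin unfolding qf_def by (simp add: W_def s'_def diff_diff_eq)
          have g: "- log 2 (enn2real (RNp (Y \<omega>, W \<omega>)) / enn2real (RNr (W \<omega>)))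
              \<le> (enn2real (RNr (W \<omega>)) * (\<Prod>i<n. normal_density 0 \<sigma> (Y \<omega> ! i - Z \<omega> - Xh \<omega> ! i) / s' i) / enn2real (RNp (Y \<omega>, W \<omega>))) / ln 2
                + (\<Sum>i<n. (Y \<omega> ! i - Z \<omega> - Xh \<omega> ! i)\<^sup>2) / (2 * \<sigma>\<^sup>2 * ln 2) + d / ln 2 * (\<Sum>i<n. s' i)
                + (-1 / ln 2 + real n * (log 2 (2*pi*\<sigma>\<^sup>2)/2 - 1/ln 2 - log 2 d))"
            by (rule gibbs_point[OF elim(1) elim(2) s d spos])
          show ?case using g unfolding A_def P_def K0_def B_def qv s'_def .
        qed
        show "P \<in> borel_measurable M" unfolding P_def by measurable
        show "0 \<le> P \<omega>" for \<omega> unfolding P_def B_def using d s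
          by (intro add_nonneg_nonneg mult_nonneg_nonneg divide_nonneg_nonneg sum_nonneg qf_nn) auto
        show "(\<integral>\<^sup>+\<omega>. ennreal (P \<omega>) \<partial>M) \<le> ennreal K"
        proof -
          define Q where "Q \<omega> = (\<Sum>i<n. (Y \<omega> ! i - Z \<omega> - Xh \<omega> ! i)\<^sup>2)" for \<omega>
          define R where "R \<omega> = (\<Sum>i<n. enn2real (Sg d \<sigma> (Z \<omega> + Xh \<omega> ! i)))" for \<omega>
          have Bnn: "0 \<le> B \<omega>" for \<omega> unfolding B_def by (auto intro!: divide_nonneg_nonneg mult_nonneg_nonneg qf_nn)
          have Qnn: "0 \<le> Q \<omega>" for \<omega> unfolding Q_def by (auto intro!: sum_nonneg)
          have Rnn: "0 \<le> R \<omega>" for \<omega> unfolding R_def by (auto intro!: sum_nonneg)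
          have c1: "0 \<le> 1 / ln (2::real)" and c2: "0 \<le> 1 / (2 * \<sigma>\<^sup>2 * ln 2)" and c3: "0 \<le> d / ln 2"
            using d s by auto
          have Pe: "ennreal (P \<omega>) = ennreal (1 / ln 2) * ennreal (B \<omega>) + ennreal (1 / (2 * \<sigma>\<^sup>2 * ln 2)) * ennreal (Q \<omega>)
              + ennreal (d / ln 2) * ennreal (R \<omega>)" for \<omega>
          proof -
            have "P \<omega> = 1 / ln 2 * B \<omega> + 1 / (2 * \<sigma>\<^sup>2 * ln 2) * Q \<omega> + d / ln 2 * R \<omega>"
              by (simp add: P_def Q_def R_def)
            also have "ennreal \<dots> = ennreal (1 / ln 2 * B \<omega>) + ennreal (1 / (2 * \<sigma>\<^sup>2 * ln 2) * Q \<omega>) + ennreal (d / ln 2 * R \<omega>)"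
            proof -
              have t1: "0 \<le> 1 / ln 2 * B \<omega>" using c1 Bnn[of \<omega>] by (rule mult_nonneg_nonneg)
              have t2: "0 \<le> 1 / (2 * \<sigma>\<^sup>2 * ln 2) * Q \<omega>" using c2 Qnn[of \<omega>] by (rule mult_nonneg_nonneg)
              have t3: "0 \<le> d / ln 2 * R \<omega>" using c3 Rnn[of \<omega>] by (rule mult_nonneg_nonneg)
              show ?thesis by (simp only: ennreal_plus[OF add_nonneg_nonneg[OF t1 t2] t3] ennreal_plus[OF t1 t2])
            qed
            finally show ?thesis by (simp only: ennreal_mult[OF c1 Bnn] ennreal_mult[OF c2 Qnn] ennreal_mult[OF c3 Rnn])
          qed
          have mB[measurable]: "(\<lambda>\<omega>. ennreal (B \<omega>)) \<in> borel_measurable M" by measurable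
          have mQ[measurable]: "(\<lambda>\<omega>. ennreal (Q \<omega>)) \<in> borel_measurable M" unfolding Q_def by measurable
          have mR[measurable]: "(\<lambda>\<omega>. ennreal (R \<omega>)) \<in> borel_measurable M" unfolding R_def by measurable
          have ER: "(\<integral>\<^sup>+\<omega>. ennreal (R \<omega>) \<partial>M) \<le> ennreal (real n * (1 / d))"
          proof -
            have "(\<integral>\<^sup>+\<omega>. ennreal (R \<omega>) \<partial>M) = (\<integral>\<^sup>+\<omega>. (\<Sum>i<n. ennreal (enn2real (Sg d \<sigma> (Z \<omega> + Xh \<omega> ! i)))) \<partial>M)"
              unfolding R_def by (intro nn_integral_cong) (subst sum_ennreal; simp)
            also have "\<dots> = (\<Sum>i<n. (\<integral>\<^sup>+\<omega>. ennreal (enn2real (Sg d \<sigma> (Z \<omega> + Xh \<omega> ! i))) \<partial>M))"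
              by (rule nn_integral_sum) auto
            also have "\<dots> \<le> (\<Sum>i<n. ennreal (1 / d))"
            proof (rule sum_mono)
              fix i
              have "(\<integral>\<^sup>+\<omega>. ennreal (enn2real (Sg d \<sigma> (Z \<omega> + Xh \<omega> ! i))) \<partial>M) \<le> (\<integral>\<^sup>+\<omega>. Sg d \<sigma> (Z \<omega> + Xh \<omega> ! i) \<partial>M)"
                by (intro nn_integral_mono) (simp add: ennreal_enn2real_if)
              also have "\<dots> \<le> ennreal (1 / d)" by (rule E3)
              finally show "(\<integral>\<^sup>+\<omega>. ennreal (enn2real (Sg d \<sigma> (Z \<omega> + Xh \<omega> ! i))) \<partial>M) \<le> ennreal (1 / d)" .
            qed
            also have "\<dots> = ennreal (real n) * ennreal (1 / d)" by (simp add: ennreal_of_nat_eq_real_of_nat)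
            also have "\<dots> = ennreal (real n * (1 / d))" using d by (subst ennreal_mult) auto
            finally show ?thesis .
          qed
          have "(\<integral>\<^sup>+\<omega>. ennreal (P \<omega>) \<partial>M) = ennreal (1 / ln 2) * (\<integral>\<^sup>+\<omega>. ennreal (B \<omega>) \<partial>M)
              + ennreal (1 / (2 * \<sigma>\<^sup>2 * ln 2)) * (\<integral>\<^sup>+\<omega>. ennreal (Q \<omega>) \<partial>M) + ennreal (d / ln 2) * (\<integral>\<^sup>+\<omega>. ennreal (R \<omega>) \<partial>M)"
            unfolding Pe by (simp add: nn_integral_add nn_integral_cmult)
          also have "\<dots> \<le> ennreal (1 / ln 2) * 1 + ennreal (1 / (2 * \<sigma>\<^sup>2 * ln 2)) * ennreal (real n * (D + D'))
              + ennreal (d / ln 2) * ennreal (real n * (1 / d))"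
            using E1 E2 ER unfolding Q_def by (intro add_mono mult_left_mono) auto
          also have "\<dots> = ennreal K"
            unfolding K_def using c1 c2 c3 Dp assms(2) d
            by (simp add: ennreal_mult[symmetric] ennreal_plus[symmetric] del: ennreal_plus)
          finally show ?thesis .
        qed
        show "0 \<le> K" unfolding K_def using Dp assms(2) d s by (intro add_nonneg_nonneg mult_nonneg_nonneg divide_nonneg_nonneg) auto
      qed
      finally show ?thesis using CE RHS by simp
    qed
  qed
  show ?thesis unfolding goal_eq by (rule main)
qed

end
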